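(* There exists an instance of the throughput-constrained online resource allocation problem (a fixed choice of all primitives, with the horizon $T$ ranging over multiples of $K$) such that every online policy $\pi$ that has myopic vanishing regret satisfies $\mathbb E[\textsc{Reg}]=\mathbb E[V^\pi[\omega]-V^{\textsc{off}}[\omega]]=\Omega(T)$.
   Context: Model. There are $m$ resources and $n$ arrival types. Type $j\in[n]$ has an assignment cost vector $c_j\in\mathbb R^m$ and a set $\mathcal S_j\subseteq[m]$ of allowed resources; $\max_{i,j}|c_{ji}|<\infty$. The horizon has $T$ periods, partitioned into $K=\Theta(1)$ epochs, $T$ a multiple of $K$; epoch $k$ consists of the periods $\mathcal T_k=\{(k-1)T/K+1,\dots,kT/K\}$. In each period $t$ one arrival of type $j^t$ occurs, $j^1,\dots,j^T$ i.i.d. with $\mathbb P(j^t=j)=p_j$ ($p$ not scaling with $T$, unknown to the decision-maker). Write $\omega=(j^t)_{t\le T}$, $\omega_k=(j^t)_{t\in\mathcal T_k}$, $\Lambda_j(t_1:t_2)=\sum_{t_1<\tau\le t_2}\mathbf 1\{j^\tau=j\}$. In period $t$ the decision-maker observes $j^t$ and either rejects the arrival (cost $0$) or assigns it to one resource $i\in\mathcal S_{j^t}$ (cost $c_{j^ti}$). For a policy $\pi$, $Z^\pi_{ji}(t)$ counts type-$j$ arrivals assigned to $i$ in periods $1..t$, $Z^\pi_i=\sum_jZ^\pi_{ji}$, $Z(t_1:t_2)=Z(t_2)-Z(t_1)$. Each epoch $k$ and resource $i$ has a target $\rho_{ki}\in[0,1]$ and a convex $L$-Lipschitz deviation cost $g_{ki}:[0,1]\to\mathbb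 R_{\ge0}$ with $g_{ki}(\rho_{ki})=0$. The cost of $\pi$ is $V^\pi[\omega]=\sum_{j,i}c_{ji}Z^\pi_{ji}(T)+\frac TK\sum_{k\in[K]}\sum_{i}k\,g_{ki}\big(Z^\pi_i(kT/K)/(kT/K)\big)$; $V^{\textsc{off}}[\omega]$ is the minimum of this expression over nonnegative integer assignments satisfying $\sum_iZ_{ji}((k-1)T/K:kT/K)\le\Lambda_j((k-1)T/K:kT/K)$ for all $j,k$ and $Z_{ji}(T)=0$ for $i\notin\mathcal S_j$. Myopic notions. For epoch $k$ and current aggregate consumption $z\in\mathbb N^m$, the myopic offline optimum $V^{\textsc{myo-off}}_k[\omega_k\mid z]$ is the minimum, over nonnegative integers $Z_{ji}((k-1)T/K:kT/K)$ with $\sum_iZ_{ji}((k-1)T/K:kT/K)\le\Lambda_j((k-1)T/K:kT/K)$ and $Z_{ji}=0$ for $i\notin\mathcal S_j$, of $$\sum_{j,i}c_{ji}Z_{ji}\big(\tfrac{(k-1)T}K:\tfrac{kT}K\big)+\frac{kT}K\sum_ig_{ki}\Big(\frac{z_i+Z_i((k-1)T/K:kT/K)}{kT/K}\Big).$$ For a policy $\pi$, $V^\pi_k[\omega_k\mid z]$ denotes the quantity in the last display evaluated at $\pi$'s own assignments in epoch $k$ with $z=Z^\pi((k-1)T/K)$ (the assignment and epoch-$k$ deviation costs incurred during epoch $k$). A policy $\pi$ has myopic vanishing regret if there is $\alpha\in[0,1)$ such that for all $k\in[K]$ and all values of $Z^\pi((k-1)T/K)\in\mathbb N^m$, $\mathbb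 E\big[V^\pi_k[\omega_k\mid Z^\pi((k-1)T/K)]-V^{\textsc{myo-off}}_k[\omega_k\mid Z^\pi((k-1)T/K)]\ \big|\ Z^\pi((k-1)T/K)\big]=O(T^\alpha)$. *)

theory Defs
  imports "HOL-Probability.Probability"
begin

text \<open>Resources are the naturals i < m, arrival types the naturals j < n,
 periods are 1..T, epochs are k = 1..K, and e = T div K is the epoch length.
 An arrival sequence is omega :: nat => nat (omega t = type arriving in period t).
 An action sequence a :: nat => nat option gives, per period, None (reject) or Some i.\<close>

definition Zres :: "(nat \<Rightarrow> nat option) \<Rightarrow> nat \<Rightarrow> nat \<Rightarrow> nat" where
  "Zres a i t = card {\<tau> \<in> {1..t}. a \<tau> = Some i}"

definition Lam :: "(nat \<Rightarrow> nat) \<Rightarrow> nat \<Rightarrow> nat \<Rightarrow> nat \<Rightarrow> nat" where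
  "Lam \<omega> j t1 t2 = card {\<tau> \<in> {t1<..t2}. \<omega> \<tau> = j}"

definition acost :: "(nat \<Rightarrow> nat \<Rightarrow> real) \<Rightarrow> (nat \<Rightarrow> nat) \<Rightarrow> (nat \<Rightarrow> nat option) \<Rightarrow> nat \<Rightarrow> nat \<Rightarrow> real" where
  "acost c \<omega> a t1 t2 = (\<Sum>\<tau>\<in>{t1<..t2}. (case a \<tau> of None \<Rightarrow> 0 | Some i \<Rightarrow> c (\<omega> \<tau>) i))"

definition Vpol :: "nat \<Rightarrow> (nat \<Rightarrow> nat \<Rightarrow> real) \<Rightarrow> (nat \<Rightarrow> nat \<Rightarrow> real \<Rightarrow> real) \<Rightarrow> nat \<Rightarrow> nat
     \<Rightarrow> (nat \<Rightarrow> nat) \<Rightarrow> (nat \<Rightarrow> nat option) \<Rightarrow> real" where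
  "Vpol m c g K T \<omega> a =
     acost c \<omega> a 0 T
     + real T / real K * (\<Sum>k\<in>{1..K}. \<Sum>i<m. real k *
          g k i (real (Zres a i (k * (T div K))) / real (k * (T div K))))"

text \<open>Feasible offline assignments: y k j i = number of type-j arrivals of epoch k assigned to i.\<close>
definition off_feasible :: "nat \<Rightarrow> nat \<Rightarrow> (nat \<Rightarrow> nat set) \<Rightarrow> nat \<Rightarrow> nat \<Rightarrow> (nat \<Rightarrow> nat)
     \<Rightarrow> (nat \<Rightarrow> nat \<Rightarrow> nat \<Rightarrow> nat) set" where
  "off_feasible m n S K T \<omega> =
     {y. (\<forall>k j i. y k j i \<noteq> 0 \<longrightarrow> k \<in> {1..K} \<and> j < n \<and> i < m \<and> i \<in> S j) \<and>
         (\<forall>k\<in>{1..K}. \<forall>j<n. (\<Sum>i<m. y k j i) \<le> Lam \<omega> j ((k - 1) * (T div K)) (k * (T div K)))}"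

definition off_cost :: "nat \<Rightarrow> nat \<Rightarrow> (nat \<Rightarrow> nat \<Rightarrow> real) \<Rightarrow> (nat \<Rightarrow> nat \<Rightarrow> real \<Rightarrow> real) \<Rightarrow> nat \<Rightarrow> nat
     \<Rightarrow> (nat \<Rightarrow> nat \<Rightarrow> nat \<Rightarrow> nat) \<Rightarrow> real" where
  "off_cost m n c g K T y =
     (\<Sum>k\<in>{1..K}. \<Sum>j<n. \<Sum>i<m. c j i * real (y k j i))
     + real T / real K * (\<Sum>k\<in>{1..K}. \<Sum>i<m. real k *
          g k i (real (\<Sum>k'\<in>{1..k}. \<Sum>j<n. y k' j i) / real (k * (T div K))))"

definition Voff :: "nat \<Rightarrow> nat \<Rightarrow> (nat \<Rightarrow> nat \<Rightarrow> real) \<Rightarrow> (nat \<Rightarrow> nat set) \<Rightarrow> (nat \<Rightarrow> nat \<Rightarrow> real \<Rightarrow> real)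
     \<Rightarrow> nat \<Rightarrow> nat \<Rightarrow> (nat \<Rightarrow> nat) \<Rightarrow> real" where
  "Voff m n c S g K T \<omega> = Min (off_cost m n c g K T ` off_feasible m n S K T \<omega>)"

definition Vmyo :: "nat \<Rightarrow> nat \<Rightarrow> (nat \<Rightarrow> nat \<Rightarrow> real) \<Rightarrow> (nat \<Rightarrow> nat set) \<Rightarrow> (nat \<Rightarrow> nat \<Rightarrow> real \<Rightarrow> real)
     \<Rightarrow> nat \<Rightarrow> nat \<Rightarrow> nat \<Rightarrow> (nat \<Rightarrow> nat) \<Rightarrow> (nat \<Rightarrow> nat) \<Rightarrow> real" where
  "Vmyo m n c S g K T k \<omega> z =
     Min ((\<lambda>y. (\<Sum>j<n. \<Sum>i<m. c j i * real (y j i))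
              + real (k * (T div K)) * (\<Sum>i<m.
                   g k i ((real (z i) + real (\<Sum>j<n. y j i)) / real (k * (T div K)))))
          ` {y. (\<forall>j i. y j i \<noteq> 0 \<longrightarrow> j < n \<and> i < m \<and> i \<in> S j) \<and>
                (\<forall>j<n. (\<Sum>i<m. y j i) \<le> Lam \<omega> j ((k - 1) * (T div K)) (k * (T div K)))})"

definition Vpol_epoch :: "nat \<Rightarrow> (nat \<Rightarrow> nat \<Rightarrow> real) \<Rightarrow> (nat \<Rightarrow> nat \<Rightarrow> real \<Rightarrow> real) \<Rightarrow> nat \<Rightarrow> nat \<Rightarrow> nat
     \<Rightarrow> (nat \<Rightarrow> nat) \<Rightarrow> (nat \<Rightarrow> nat option) \<Rightarrow> real" where
  "Vpol_epoch m c g K T k \<omega> a =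
     acost c \<omega> a ((k - 1) * (T div K)) (k * (T div K))
     + real (k * (T div K)) * (\<Sum>i<m. g k i (real (Zres a i (k * (T div K))) / real (k * (T div K))))"

definition valid_instance :: "nat \<Rightarrow> nat \<Rightarrow> (nat \<Rightarrow> nat \<Rightarrow> real) \<Rightarrow> (nat \<Rightarrow> nat set) \<Rightarrow> nat \<Rightarrow> nat pmf
     \<Rightarrow> (nat \<Rightarrow> nat \<Rightarrow> real) \<Rightarrow> (nat \<Rightarrow> nat \<Rightarrow> real \<Rightarrow> real) \<Rightarrow> real \<Rightarrow> bool" where
  "valid_instance m n c S K p \<rho> g L \<longleftrightarrow>
     K \<ge> 1 \<and> set_pmf p \<subseteq> {..<n} \<and> (\<forall>j<n. S j \<subseteq> {..<m}) \<and> L \<ge> 0 \<and>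
     (\<forall>k\<in>{1..K}. \<forall>i<m.
        \<rho> k i \<in> {0..1} \<and> convex_on {0..1} (g k i) \<and> L-lipschitz_on {0..1} (g k i) \<and>
        (\<forall>x\<in>{0..1}. g k i x \<ge> 0) \<and> g k i (\<rho> k i) = 0)"

definition arrivals :: "nat pmf \<Rightarrow> nat \<Rightarrow> (nat \<Rightarrow> nat) pmf" where
  "arrivals p T = Pi_pmf {1..T} 0 (\<lambda>_. p)"

text \<open>Online policy (possibly randomized): for each horizon T, a seed r is drawn from R T,
 independent of the arrivals, and pol T r omega t is the decision in period t.\<close>
definition online_policy :: "(nat \<Rightarrow> nat set) \<Rightarrow> (nat \<Rightarrow> nat \<Rightarrow> (nat \<Rightarrow> nat) \<Rightarrow> nat \<Rightarrow> nat option) \<Rightarrow> bool" where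
  "online_policy S pol \<longleftrightarrow>
     (\<forall>T r \<omega> \<omega>' t. t \<in> {1..T} \<longrightarrow> (\<forall>\<tau>\<in>{1..t}. \<omega> \<tau> = \<omega>' \<tau>) \<longrightarrow> pol T r \<omega> t = pol T r \<omega>' t) \<and>
     (\<forall>T r \<omega> t i. t \<in> {1..T} \<longrightarrow> pol T r \<omega> t = Some i \<longrightarrow> i \<in> S (\<omega> t))"

definition run_pmf :: "(nat \<Rightarrow> nat pmf) \<Rightarrow> nat pmf \<Rightarrow> nat \<Rightarrow> (nat \<times> (nat \<Rightarrow> nat)) pmf" where
  "run_pmf R p T = pair_pmf (R T) (arrivals p T)"

text \<open>Myopic vanishing regret (O-constant uniform over the conditioning value z).\<close>
definition myopic_vanishing_regret :: "nat \<Rightarrow> nat \<Rightarrow> (nat \<Rightarrow> nat \<Rightarrow> real) \<Rightarrow> (nat \<Rightarrow> nat set) \<Rightarrow> nat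
     \<Rightarrow> nat pmf \<Rightarrow> (nat \<Rightarrow> nat \<Rightarrow> real \<Rightarrow> real) \<Rightarrow> (nat \<Rightarrow> nat pmf)
     \<Rightarrow> (nat \<Rightarrow> nat \<Rightarrow> (nat \<Rightarrow> nat) \<Rightarrow> nat \<Rightarrow> nat option) \<Rightarrow> bool" where
  "myopic_vanishing_regret m n c S K p g R pol \<longleftrightarrow>
     (\<exists>\<alpha>::real. 0 \<le> \<alpha> \<and> \<alpha> < 1 \<and> (\<exists>C::real. \<exists>T0::nat. \<forall>T\<ge>T0. K dvd T \<longrightarrow>
        (\<forall>k\<in>{1..K}. \<forall>z::nat \<Rightarrow> nat.
           let E = {(r, \<omega>). \<forall>i<m. Zres (pol T r \<omega>) i ((k - 1) * (T div K)) = z i} in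
           set_pmf (run_pmf R p T) \<inter> E \<noteq> {} \<longrightarrow>
           measure_pmf.expectation (cond_pmf (run_pmf R p T) E)
             (\<lambda>(r, \<omega>). Vpol_epoch m c g K T k \<omega> (pol T r \<omega>) - Vmyo m n c S g K T k \<omega> z)
           \<le> C * real T powr \<alpha>)))"

end

theory Submission
  imports Defs
begin


definition gg :: "nat \<Rightarrow> nat \<Rightarrow> real \<Rightarrow> real" where
  "gg k i x = (if k = 1 then 1 - x else 2 * x)"

definition w0 :: "nat \<Rightarrow> nat" where "w0 = (\<lambda>_. 0)"

lemma valid: "valid_instance 1 1 (\<lambda>_ _. 0) (\<lambda>_. {0}) 2 (return_pmf 0)
   (\<lambda>k i. if k = 1 then 1 else 0) gg 2"
proof -
  have c1: "convex_on {0..1} (\<lambda>x::real. 1 - x)"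
    by (auto simp: convex_on_def algebra_simps)
  have c2: "convex_on {0..1} (\<lambda>x::real. 2 * x)"
    by (auto simp: convex_on_def algebra_simps)
  have l1: "2-lipschitz_on {0..1} (\<lambda>x::real. 1 - x)"
    by (rule lipschitz_onI) (auto simp: dist_real_def abs_minus_commute)
  have l2: "2-lipschitz_on {0..1} (\<lambda>x::real. 2 * x)"
    by (rule lipschitz_onI) (auto simp: dist_real_def abs_if)
  have ggf: "gg k i = (if k = 1 then (\<lambda>x. 1 - x) else (\<lambda>x. 2*x))" for k i
    by (auto simp: gg_def)
  show ?thesis unfolding valid_instance_def
    using c1 c2 l1 l2 by (auto simp: ggf)
qed

lemma arr: "arrivals (return_pmf 0) T = return_pmf w0"
  unfolding arrivals_def w0_def
  using Pi_pmf_return_pmf[of "{1..T}" 0 "\<lambda>_. 0"] by simp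

lemma run: "run_pmf R (return_pmf 0) T = map_pmf (\<lambda>r. (r, w0)) (R T)"
  unfolding run_pmf_def arr by (simp add: pair_return_pmf2)

lemma cond_univ: "cond_pmf p UNIV = p"
  proof (rule pmf_eqI)
  fix x
  have "set_pmf p \<inter> UNIV \<noteq> {}" using set_pmf_not_empty by simp
  then show "pmf (cond_pmf p UNIV) x = pmf p x"
    by (simp add: pmf_cond)
qed

lemma Zres_le: "Zres a i t \<le> t"
proof -
  have "Zres a i t \<le> card {1..t}" unfolding Zres_def by (rule card_mono) auto
  then show ?thesis by simp
qed

lemma Zres_mono: "t \<le> t' \<Longrightarrow> Zres a i t \<le> Zres a i t'"
  unfolding Zres_def by (rule card_mono) auto

lemma Zres0: "Zres a i 0 = 0" unfolding Zres_def by simp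

lemma acost0: "acost (\<lambda>_ _. 0) w a t1 t2 = 0"
  unfolding acost_def by (rule sum.neutral) (auto split: option.split)

lemma Lam_w0: "Lam w0 0 s t = t - s"
proof -
  have "{\<tau> \<in> {s<..t}. w0 \<tau> = 0} = {s<..t}" by (auto simp: w0_def)
  then show ?thesis unfolding Lam_def by simp
qed

lemma two_div[simp]: "2 * e div 2 = (e::nat)" by simp
lemma set12: "{1..2::nat} = {1,2}" by auto
lemma set12': "{Suc 0..2::nat} = {1,2}" by auto

lemma Vpol_eq: assumes "e > 0"
  shows "Vpol 1 (\<lambda>_ _. 0) gg 2 (2*e) w a = real e - real (Zres a 0 e) + 2 * real (Zres a 0 (2*e))"
  using assms by (simp add: Vpol_def acost0 gg_def set12 set12' field_simps)

lemma Vep_eq: assumes "e > 0"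
  shows "Vpol_epoch 1 (\<lambda>_ _. 0) gg 2 (2*e) 1 w a = real e - real (Zres a 0 e)"
  using assms by (simp add: Vpol_epoch_def acost0 gg_def field_simps)

lemma Vmyo_le: assumes "e > 0" "z 0 = 0"
  shows "Vmyo 1 1 (\<lambda>_ _. 0) (\<lambda>_. {0}) gg 2 (2*e) 1 w0 z \<le> 0"
proof -
  define Y where "Y = {y::nat\<Rightarrow>nat\<Rightarrow>nat. (\<forall>j i. y j i \<noteq> 0 \<longrightarrow> j < 1 \<and> i < 1 \<and> i \<in> {0::nat}) \<and>
                (\<forall>j<1. (\<Sum>i<1. y j i) \<le> Lam w0 j ((1 - 1) * (2*e div 2)) (1 * (2*e div 2)))}"
  define F where "F = {f::nat\<times>nat\<Rightarrow>nat. \<forall>x. (x \<in> {(0,0)} \<longrightarrow> f x \<in> {0..e}) \<and> (x \<notin> {(0,0)} \<longrightarrow> f x = 0)}"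
  have fF: "finite F" unfolding F_def by (rule finite_set_of_finite_funs) auto
  have "Y \<subseteq> (\<lambda>f j i. f (j,i)) ` F"
  proof
    fix y assume "y \<in> Y"
    then have "\<And>j i. y j i \<noteq> 0 \<Longrightarrow> j = 0 \<and> i = 0" and "y 0 0 \<le> e"
      by (auto simp: Y_def Lam_w0)
    then have "(\<lambda>(j,i). y j i) \<in> F" unfolding F_def by fastforce
    then show "y \<in> (\<lambda>f j i. f (j,i)) ` F" by (rule rev_image_eqI) auto
  qed
  then have fY: "finite Y" using fF finite_surj by blast
  define ys where "ys = (\<lambda>(j::nat) (i::nat). if j = 0 \<and> i = 0 then e else 0)"
  have ysY: "ys \<in> Y" by (auto simp: Y_def ys_def Lam_w0)
  have "Vmyo 1 1 (\<lambda>_ _. 0) (\<lambda>_. {0}) gg 2 (2*e) 1 w0 z \<le>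
     (\<lambda>y. (\<Sum>j<1. \<Sum>i<1. 0 * real (y j i))
              + real (1 * (2*e div 2)) * (\<Sum>i<1.
                   gg 1 i ((real (z i) + real (\<Sum>j<1. y j i)) / real (1 * (2*e div 2))))) ys"
    unfolding Vmyo_def Y_def[symmetric]
    using fY ysY by (intro Min_le) auto
  also have "\<dots> = 0" using assms by (simp add: ys_def gg_def)
  finally show ?thesis .
qed

lemma Voff_le: assumes "e > 0"
  shows "Voff 1 1 (\<lambda>_ _. 0) (\<lambda>_. {0}) gg 2 (2*e) w0 \<le> real e"
proof -
  define Y where "Y = off_feasible 1 1 (\<lambda>_. {0}) 2 (2*e) w0"
  define F where "F = {f::nat\<times>nat\<times>nat\<Rightarrow>nat. \<forall>x. (x \<in> {1..2}\<times>{0}\<times>{0} \<longrightarrow> f x \<in> {0..e}) \<and> (x \<notin> {1..2}\<times>{0}\<times>{0} \<longrightarrow> f x = 0)}"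
  have fF: "finite F" unfolding F_def by (rule finite_set_of_finite_funs) auto
  have "Y \<subseteq> (\<lambda>f k j i. f (k,j,i)) ` F"
  proof
    fix y assume "y \<in> Y"
    then have A: "\<And>k j i. y k j i \<noteq> 0 \<Longrightarrow> k \<in> {1..2} \<and> j = 0 \<and> i = 0" and B: "\<And>k. k \<in> {1..2} \<Longrightarrow> y k 0 0 \<le> e"
      by (auto simp: Y_def off_feasible_def Lam_w0 set12 set12')
    have "(\<lambda>(k,j,i). y k j i) \<in> F" unfolding F_def mem_Collect_eq
    proof (intro allI conjI impI)
      fix x :: "nat\<times>nat\<times>nat" assume "x \<in> {1..2}\<times>{0}\<times>{0}"
      then show "(\<lambda>(k,j,i). y k j i) x \<in> {0..e}" using B by auto
    next
      fix x :: "nat\<times>nat\<times>nat" assume "x \<notin> {1..2}\<times>{0}\<times>{0}"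
      then show "(\<lambda>(k,j,i). y k j i) x = 0" using A by (cases x) fastforce
    qed
    then show "y \<in> (\<lambda>f k j i. f (k,j,i)) ` F" by (rule rev_image_eqI) auto
  qed
  then have fY: "finite Y" using fF finite_surj by blast
  have ysY: "(\<lambda>_ _ _. 0) \<in> Y" by (auto simp: Y_def off_feasible_def)
  have "Voff 1 1 (\<lambda>_ _. 0) (\<lambda>_. {0}) gg 2 (2*e) w0 \<le> off_cost 1 1 (\<lambda>_ _. 0) gg 2 (2*e) (\<lambda>_ _ _. 0)"
    unfolding Voff_def Y_def[symmetric]
    using fY ysY by (intro Min_le) auto
  also have "\<dots> = real e" using assms by (simp add: off_cost_def gg_def set12 set12')
  finally show ?thesis .
qed



lemma asym:
  fixes \<alpha> B t :: real
  assumes "0 \<le> \<alpha>" "\<alpha> < 1" "B > 0" "t \<ge> B powr (1/(1-\<alpha>))" "t > 0"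
  shows "B * t powr \<alpha> \<le> t"
proof -
  have "B = (B powr (1/(1-\<alpha>))) powr (1-\<alpha>)"
    using assms by (simp add: powr_powr)
  also have "\<dots> \<le> t powr (1-\<alpha>)"
    using assms by (intro powr_mono2) auto
  finally have "B * t powr \<alpha> \<le> t powr (1-\<alpha>) * t powr \<alpha>"
    by (intro mult_right_mono) auto
  also have "\<dots> = t" using assms by (simp add: powr_add[symmetric])
  finally show ?thesis .
qed

lemma main:
  assumes mvr: "myopic_vanishing_regret 1 1 (\<lambda>_ _. 0) (\<lambda>_. {0}) 2 (return_pmf 0) gg R pol"
  shows "\<exists>c0::real. c0 > 0 \<and> (\<exists>T0::nat. \<forall>T\<ge>T0. 2 dvd T \<longrightarrow>
          measure_pmf.expectation (run_pmf R (return_pmf 0) T)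
            (\<lambda>(r, \<omega>). Vpol 1 (\<lambda>_ _. 0) gg 2 T \<omega> (pol T r \<omega>) - Voff 1 1 (\<lambda>_ _. 0) (\<lambda>_. {0}) gg 2 T \<omega>)
          \<ge> c0 * real T)"
proof -
  from mvr obtain \<alpha> C T0 where a0: "0 \<le> \<alpha>" and a1: "\<alpha> < 1" and
    H: "\<And>T. T \<ge> T0 \<Longrightarrow> 2 dvd T \<Longrightarrow> (\<forall>k\<in>{1..2}. \<forall>z::nat \<Rightarrow> nat.
           let E = {(r, \<omega>). \<forall>i<1. Zres (pol T r \<omega>) i ((k - 1) * (T div 2)) = z i} in
           set_pmf (run_pmf R (return_pmf 0) T) \<inter> E \<noteq> {} \<longrightarrow>
           measure_pmf.expectation (cond_pmf (run_pmf R (return_pmf 0) T) E)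
             (\<lambda>(r, \<omega>). Vpol_epoch 1 (\<lambda>_ _. 0) gg 2 T k \<omega> (pol T r \<omega>) - Vmyo 1 1 (\<lambda>_ _. 0) (\<lambda>_. {0}) gg 2 T k \<omega> z)
           \<le> C * real T powr \<alpha>)"
    unfolding myopic_vanishing_regret_def by blast
  define B where "B = 4 * \<bar>C\<bar> + 1"
  have B0: "B > 0" unfolding B_def by simp
  define N where "N = nat \<lceil>B powr (1/(1-\<alpha>))\<rceil>"
  show ?thesis
  proof (intro exI[of _ "1/4"] conjI, simp, intro exI[of _ "max (max T0 N) 2"] allI impI)
    fix T :: nat assume T1: "max (max T0 N) 2 \<le> T" and T2: "2 dvd T"
    obtain e where Te: "T = 2 * e" using T2 by blast
    have e0: "e > 0" using T1 Te by simp
    have TN: "real T \<ge> B powr (1/(1-\<alpha>))" using T1 unfolding N_def by linarith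
    have asy: "B * real T powr \<alpha> \<le> real T" using asym[OF a0 a1 B0 TN] T1 by simp
    have CT: "C * real T powr \<alpha> \<le> real T / 4"
    proof -
      have "C * real T powr \<alpha> \<le> \<bar>C\<bar> * real T powr \<alpha>" by (intro mult_right_mono) auto
      also have "\<dots> \<le> (B / 4) * real T powr \<alpha>" unfolding B_def by (intro mult_right_mono) auto
      finally show ?thesis using asy by simp
    qed
    have T0le: "T0 \<le> T" using T1 by simp
    have EU: "{(r, \<omega>). \<forall>i<1. Zres (pol T r \<omega>) i ((1 - 1) * (T div 2)) = (\<lambda>_::nat. 0::nat) i} = UNIV"
      by (auto simp: Zres0)
    have "let E = {(r, \<omega>). \<forall>i<1. Zres (pol T r \<omega>) i ((1 - 1) * (T div 2)) = (\<lambda>_::nat. 0::nat) i} in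
           set_pmf (run_pmf R (return_pmf 0) T) \<inter> E \<noteq> {} \<longrightarrow>
           measure_pmf.expectation (cond_pmf (run_pmf R (return_pmf 0) T) E)
             (\<lambda>(r, \<omega>). Vpol_epoch 1 (\<lambda>_ _. 0) gg 2 T 1 \<omega> (pol T r \<omega>) - Vmyo 1 1 (\<lambda>_ _. 0) (\<lambda>_. {0}) gg 2 T 1 \<omega> (\<lambda>_. 0))
           \<le> C * real T powr \<alpha>"
      using spec[OF bspec[OF H[OF T0le T2], of 1], of "\<lambda>_. 0"] by simp
    then have H1: "measure_pmf.expectation (run_pmf R (return_pmf 0) T)
             (\<lambda>(r, \<omega>). Vpol_epoch 1 (\<lambda>_ _. 0) gg 2 T 1 \<omega> (pol T r \<omega>) - Vmyo 1 1 (\<lambda>_ _. 0) (\<lambda>_. {0}) gg 2 T 1 \<omega> (\<lambda>_. 0))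
           \<le> C * real T powr \<alpha>"
      unfolding EU Let_def cond_univ using set_pmf_not_empty by auto
    define V1 where "V1 = Vmyo 1 1 (\<lambda>_ _. 0) (\<lambda>_. {0}) gg 2 T 1 w0 (\<lambda>_. 0)"
    define V0 where "V0 = Voff 1 1 (\<lambda>_ _. 0) (\<lambda>_. {0}) gg 2 T w0"
    have V1le: "V1 \<le> 0" unfolding V1_def Te using Vmyo_le[OF e0] by simp
    have V0le: "V0 \<le> real e" unfolding V0_def Te using Voff_le[OF e0] by simp
    define Z1 where "Z1 = (\<lambda>r. real (Zres (pol T r w0) 0 e))"
    define Z2 where "Z2 = (\<lambda>r. real (Zres (pol T r w0) 0 (2*e)))"
    have Z1b: "Z1 r \<le> real e" for r unfolding Z1_def using Zres_le by simp
    have Z2b: "Z2 r \<le> 2 * real e" for r unfolding Z2_def using Zres_le[of "pol T r w0" 0 "2*e"] by linarith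
    have Z12: "Z1 r \<le> Z2 r" for r unfolding Z1_def Z2_def by (simp add: Zres_mono)
    have iZ1: "integrable (measure_pmf (R T)) Z1"
      by (rule measure_pmf.integrable_const_bound[where B="real e"]) (auto intro!: AE_I2 simp: Z1b Z1_def Zres_le)
    have Z2n: "\<bar>Z2 r\<bar> \<le> 2 * real e" for r using Z2b[of r] unfolding Z2_def by simp
    have iZ2: "integrable (measure_pmf (R T)) Z2"
      by (rule measure_pmf.integrable_const_bound[where B="2 * real e"]) (use Z2n in \<open>auto intro!: AE_I2\<close>)
    have H2: "measure_pmf.expectation (R T) (\<lambda>r. real e - Z1 r - V1) \<le> C * real T powr \<alpha>"
      using H1 unfolding run Te V1_def Z1_def using Vep_eq[OF e0] by simp
    have G: "measure_pmf.expectation (run_pmf R (return_pmf 0) T)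
            (\<lambda>(r, \<omega>). Vpol 1 (\<lambda>_ _. 0) gg 2 T \<omega> (pol T r \<omega>) - Voff 1 1 (\<lambda>_ _. 0) (\<lambda>_. {0}) gg 2 T \<omega>)
         = measure_pmf.expectation (R T) (\<lambda>r. real e - Z1 r + 2 * Z2 r - V0)"
      unfolding run Te V0_def Z1_def Z2_def using Vpol_eq[OF e0] by simp
    have E1: "measure_pmf.expectation (R T) (\<lambda>r. real e - Z1 r - V1) = real e - measure_pmf.expectation (R T) Z1 - V1"
      using iZ1 by (simp add: integral_diff)
    have E2: "measure_pmf.expectation (R T) (\<lambda>r. real e - Z1 r + 2 * Z2 r - V0) = real e - measure_pmf.expectation (R T) Z1 + 2 * measure_pmf.expectation (R T) Z2 - V0"
      using iZ1 iZ2 by (simp add: integral_diff integral_add)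
    have M: "measure_pmf.expectation (R T) Z1 \<le> measure_pmf.expectation (R T) Z2"
      using iZ1 iZ2 Z12 by (intro integral_mono) auto
    show "1/4 * real T \<le> measure_pmf.expectation (run_pmf R (return_pmf 0) T)
            (\<lambda>(r, \<omega>). Vpol 1 (\<lambda>_ _. 0) gg 2 T \<omega> (pol T r \<omega>) - Voff 1 1 (\<lambda>_ _. 0) (\<lambda>_. {0}) gg 2 T \<omega>)"
      unfolding G E2 using H2 E1 M V1le V0le CT Te by simp
  qed
qed


theorem proposition1:
  shows "\<exists>(m::nat) (n::nat) (c::nat \<Rightarrow> nat \<Rightarrow> real) (S::nat \<Rightarrow> nat set) (K::nat) (p::nat pmf)
            (\<rho>::nat \<Rightarrow> nat \<Rightarrow> real) (g::nat \<Rightarrow> nat \<Rightarrow> real \<Rightarrow> real) (L::real).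
    valid_instance m n c S K p \<rho> g L \<and>
    (\<forall>(R::nat \<Rightarrow> nat pmf) (pol::nat \<Rightarrow> nat \<Rightarrow> (nat \<Rightarrow> nat) \<Rightarrow> nat \<Rightarrow> nat option).
       online_policy S pol \<and> myopic_vanishing_regret m n c S K p g R pol \<longrightarrow>
       (\<exists>c0::real. c0 > 0 \<and> (\<exists>T0::nat. \<forall>T\<ge>T0. K dvd T \<longrightarrow>
          measure_pmf.expectation (run_pmf R p T)
            (\<lambda>(r, \<omega>). Vpol m c g K T \<omega> (pol T r \<omega>) - Voff m n c S g K T \<omega>)
          \<ge> c0 * real T)))"
  apply (rule exI[where x="1::nat"], rule exI[where x="1::nat"], rule exI[where x="\<lambda>_ _. 0::real"],
     rule exI[where x="\<lambda>_::nat. {0::nat}"], rule exI[where x="2::nat"],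
     rule exI[where x="return_pmf (0::nat)"], rule exI[where x="\<lambda>(k::nat) (i::nat). if k = 1 then 1 else (0::real)"],
     rule exI[where x=gg], rule exI[where x="2::real"], rule conjI)
   apply (rule valid)
  using main by blast

end
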